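(* There exists a point $x\in\{0,1\}^{\mathbb{N}}$ such that, for the full shift $(\{0,1\}^{\mathbb{N}},S)$, the set of ergodic measures appearing in the ergodic decompositions of members of $V(x)$ is strictly bigger than the set of ergodic measures appearing in the ergodic decompositions of members of $V^{\log}(x)$.
   Context: $S$ is the left shift. For $N\ge1$ let $\mathrm{Emp}(x,N)=\frac1N\sum_{n=1}^N\delta_{S^{n-1}(x)}$, and for $N\ge2$ let $\mathrm{Emp}^{\log}(x,N)=\frac1{\log N}\sum_{n=1}^N\frac1n\delta_{S^{n-1}(x)}$. $V(x)$ (resp. $V^{\log}(x)$) is the set of Borel probability measures $\nu$ such that $\mathrm{Emp}(x,N_k)\to\nu$ (resp. $\mathrm{Emp}^{\log}(x,N_k)\to\nu$) weak-$*$ for some increasing sequence $(N_k)$; these consist of $S$-invariant measures, each of which has an ergodic decomposition. *)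

theory Defs
  imports "HOL-Analysis.Analysis" "HOL-Probability.Probability"
begin

text \<open>The full shift on the Cantor space {0,1}^N, modelled as nat => bool with the
product topology (bool discrete); Borel sets = product sigma-algebra.\<close>

type_synonym cantor = "nat \<Rightarrow> bool"

definition shift :: "cantor \<Rightarrow> cantor" where
  "shift x = (\<lambda>n. x (Suc n))"

definition borel_prob :: "cantor measure \<Rightarrow> bool" where
  "borel_prob \<nu> \<longleftrightarrow> prob_space \<nu> \<and> sets \<nu> = sets borel"

text \<open>Weak-star convergence of Emp(x, N_k) to nu, unfolded: for every continuous f,
  (1/N_k) sum_{n=1}^{N_k} f(S^(n-1) x) tends to the integral of f w.r.t. nu.\<close>
definition V :: "cantor \<Rightarrow> cantor measure set" where
  "V x = {\<nu>. borel_prob \<nu> \<and>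
     (\<exists>N :: nat \<Rightarrow> nat. strict_mono N \<and> (\<forall>k. N k \<ge> 1) \<and>
        (\<forall>f :: cantor \<Rightarrow> real. continuous_on UNIV f \<longrightarrow>
           (\<lambda>k. (1 / real (N k)) * (\<Sum>n=1..N k. f ((shift ^^ (n - 1)) x)))
             \<longlonglongrightarrow> integral\<^sup>L \<nu> f))}"

definition Vlog :: "cantor \<Rightarrow> cantor measure set" where
  "Vlog x = {\<nu>. borel_prob \<nu> \<and>
     (\<exists>N :: nat \<Rightarrow> nat. strict_mono N \<and> (\<forall>k. N k \<ge> 2) \<and>
        (\<forall>f :: cantor \<Rightarrow> real. continuous_on UNIV f \<longrightarrow>
           (\<lambda>k. (1 / ln (real (N k))) * (\<Sum>n=1..N k. (1 / real n) * f ((shift ^^ (n - 1)) x)))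
             \<longlonglongrightarrow> integral\<^sup>L \<nu> f))}"

definition invariant_measure :: "cantor measure \<Rightarrow> bool" where
  "invariant_measure \<mu> \<longleftrightarrow> borel_prob \<mu> \<and>
     (\<forall>A \<in> sets borel. emeasure \<mu> (shift -` A) = emeasure \<mu> A)"

definition ergodic_measure :: "cantor measure \<Rightarrow> bool" where
  "ergodic_measure \<mu> \<longleftrightarrow> invariant_measure \<mu> \<and>
     (\<forall>A \<in> sets borel. shift -` A = A \<longrightarrow> emeasure \<mu> A = 0 \<or> emeasure \<mu> A = 1)"

text \<open>An ergodic decomposition of nu: a probability measure P on the (Giry) space of
  Borel (sub)probability measures, concentrated on ergodic measures, with
  nu = integral of mu dP(mu) (i.e. nu = join P).\<close>
definition ergodic_decomposition :: "cantor measure \<Rightarrow> cantor measure measure \<Rightarrow> bool" where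
  "ergodic_decomposition \<nu> P \<longleftrightarrow>
     sets P = sets (subprob_algebra borel) \<and> prob_space P \<and>
     (AE \<mu> in P. ergodic_measure \<mu>) \<and> join P = \<nu>"

text \<open>Topological support of P with respect to the weak-star topology on measures:
  every basic weak-star neighbourhood of mu has positive P-measure.\<close>
definition in_weak_support :: "cantor measure measure \<Rightarrow> cantor measure \<Rightarrow> bool" where
  "in_weak_support P \<mu> \<longleftrightarrow>
     (\<forall>F :: (cantor \<Rightarrow> real) set. \<forall>\<epsilon>::real.
        finite F \<and> (\<forall>f\<in>F. continuous_on UNIV f) \<and> \<epsilon> > 0 \<longrightarrow>
        emeasure P {\<eta> \<in> space P. \<forall>f\<in>F. \<bar>integral\<^sup>L \<eta> f - integral\<^sup>L \<mu> f\<bar> < \<epsilon>} > 0)"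

definition ergodic_components :: "cantor measure set \<Rightarrow> cantor measure set" where
  "ergodic_components W = {\<mu>. ergodic_measure \<mu> \<and>
     (\<exists>\<nu>\<in>W. \<exists>P. ergodic_decomposition \<nu> P \<and> in_weak_support P \<mu>)}"

end

theory Submission
  imports Defs "HOL-Real_Asymp.Real_Asymp"
begin

lemma compact_cantor: "compact (UNIV :: cantor set)"
proof -
  have "compact_space (product_topology (\<lambda>i::nat. euclidean::bool topology) UNIV)"
  proof -
    have b0: "compact (UNIV :: bool set)" by (rule finite_imp_compact) simp
    have b: "compact_space (euclidean :: bool topology)" unfolding compact_space_def
      using b0 by (simp only: topspace_euclidean compactin_euclidean_iff)
    show ?thesis by (rule compact_space_product_topology[THEN iffD2], rule disjI2) (use b in simp)
  qed
  then have "compactin euclidean (UNIV::cantor set)"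
    unfolding euclidean_product_topology compact_space_def topspace_euclidean .
  then show ?thesis by simp
qed

lemma cont_bounded:
  fixes f :: "cantor \<Rightarrow> real"
  assumes "continuous_on UNIV f"
  shows "\<exists>B. \<forall>y. \<bar>f y\<bar> \<le> B"
proof -
  have "compact (f ` UNIV)" using compact_continuous_image[OF assms compact_cantor] .
  then have "bounded (f ` UNIV)" by (rule compact_imp_bounded)
  then show ?thesis by (auto simp: bounded_iff)
qed

lemma cont_cyl:
  fixes f :: "cantor \<Rightarrow> real"
  assumes "continuous_on UNIV f" "e > 0"
  shows "\<exists>m. \<forall>y. (\<forall>i<m. y i = z i) \<longrightarrow> \<bar>f y - f z\<bar> < e"
proof -
  define Ob where "Ob = f -` ball (f z) e"
  have "open Ob"
    unfolding Ob_def
    using continuous_on_open_vimage[OF open_UNIV, THEN iffD1, OF assms(1), rule_format, OF open_ball[of "f z" e]] by simp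
  then have op: "openin (product_topology (\<lambda>i. euclidean) UNIV) Ob"
    by (simp add: open_fun_def)
  have zO: "z \<in> Ob" using assms by (simp add: Ob_def)
  obtain U where U: "finite {i \<in> UNIV. U i \<noteq> topspace euclidean}" "z \<in> Pi\<^sub>E UNIV U" "Pi\<^sub>E UNIV U \<subseteq> Ob"
    using bspec[OF op[unfolded openin_product_topology_alt] zO] by (elim exE conjE) (rule that)
  have fin: "finite {i. U i \<noteq> UNIV}" using U(1) by simp
  obtain m where m: "\<And>i. U i \<noteq> UNIV \<Longrightarrow> i < m"
    using finite_nat_bounded[OF fin] by auto
  show ?thesis
  proof (intro exI allI impI)
    fix y :: cantor assume y: "\<forall>i<m. y i = z i"
    have "y i \<in> U i" for i
    proof (cases "U i = UNIV")
      case False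
      then have "i < m" by (rule m)
      then have "y i = z i" using y by simp
      moreover have "z i \<in> U i" using U(2) by (simp add: PiE_iff)
      ultimately show ?thesis by simp
    qed simp
    then have "y \<in> Pi\<^sub>E UNIV U" by (simp add: PiE_iff)
    then have "y \<in> Ob" using U(3) by blast
    then show "\<bar>f y - f z\<bar> < e" by (simp add: Ob_def dist_real_def abs_minus_commute)
  qed
qed

lemma shift_pow: "(shift ^^ j) y i = y (i + j)"
  by (induction j arbitrary: y i) (auto simp: shift_def funpow_Suc_right)

lemma cont_shift: "continuous_on UNIV shift"
  unfolding shift_def by (intro continuous_intros) simp

lemma shift_meas: "shift \<in> borel_measurable borel"
  using cont_shift borel_measurable_continuous_onI by blast

lemma weighted_avg_tendsto:
  fixes g w D :: "nat \<Rightarrow> real" and N :: "nat \<Rightarrow> nat" and P :: "nat \<Rightarrow> nat \<Rightarrow> bool"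
  assumes bnd: "\<And>n. \<bar>g n\<bar> \<le> B"
    and w: "\<And>n. w n \<ge> 0"
    and Dpos: "\<And>k. D k > 0"
    and tot: "(\<lambda>k. (\<Sum>n=1..N k. w n) / D k) \<longlonglongrightarrow> 1"
    and good: "\<And>e. e > 0 \<Longrightarrow> \<exists>m. \<forall>n. P m n \<longrightarrow> \<bar>g n - c\<bar> \<le> e"
    and bad: "\<And>m. (\<lambda>k. (\<Sum>n\<in>{n\<in>{1..N k}. \<not> P m n}. w n) / D k) \<longlonglongrightarrow> 0"
  shows "(\<lambda>k. (1 / D k) * (\<Sum>n=1..N k. w n * g n)) \<longlonglongrightarrow> c"
proof (rule tendstoI)
  fix e :: real assume e: "e > 0"
  define K where "K = B + \<bar>c\<bar>"
  have K: "K \<ge> 0" using bnd[of 0] by (simp add: K_def)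
  obtain m where m: "\<And>n. P m n \<Longrightarrow> \<bar>g n - c\<bar> \<le> e/4" using good[of "e/4"] e by auto
  define d where "d = min 1 (e / (4 * (K + \<bar>c\<bar> + 1)))"
  have d: "d > 0" using e K by (simp add: d_def)
  have ev1: "eventually (\<lambda>k. dist ((\<Sum>n=1..N k. w n) / D k) 1 < d) sequentially"
    using tendstoD[OF tot d] .
  have ev2: "eventually (\<lambda>k. dist ((\<Sum>n\<in>{n\<in>{1..N k}. \<not> P m n}. w n) / D k) 0 < d) sequentially"
    using tendstoD[OF bad d] .
  show "eventually (\<lambda>k. dist ((1 / D k) * (\<Sum>n=1..N k. w n * g n)) c < e) sequentially"
    using ev1 ev2
  proof eventually_elim
    case (elim k)
    define I where "I = {1..N k}"
    define W where "W = (\<Sum>n\<in>I. w n)"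
    define Wb where "Wb = (\<Sum>n\<in>{n\<in>I. \<not> P m n}. w n)"
    define S where "S = (\<Sum>n\<in>I. w n * g n)"
    have r: "\<bar>W / D k - 1\<bar> < d" using elim by (simp add: W_def I_def dist_real_def)
    have s: "\<bar>Wb / D k\<bar> < d" using elim by (simp add: Wb_def I_def dist_real_def)
    have pt: "\<bar>w n * g n - c * w n\<bar> \<le> e/4 * w n + K * (if P m n then 0 else w n)" for n
    proof (cases "P m n")
      case True
      have "\<bar>w n * g n - c * w n\<bar> = w n * \<bar>g n - c\<bar>" using w[of n]
        by (metis abs_mult abs_of_nonneg mult.commute right_diff_distrib)
      also have "\<dots> \<le> w n * (e/4)" using m[OF True] w[of n] by (intro mult_left_mono) auto
      finally show ?thesis using True by (simp add: mult.commute)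
    next
      case False
      have "\<bar>w n * g n - c * w n\<bar> = w n * \<bar>g n - c\<bar>" using w[of n]
        by (metis abs_mult abs_of_nonneg mult.commute right_diff_distrib)
      also have "\<dots> \<le> w n * K" using w[of n] bnd[of n] by (intro mult_left_mono) (auto simp: K_def)
      moreover have "0 \<le> e * w n / 4" using e w[of n] by simp
      ultimately show ?thesis using False by (simp add: mult.commute)
    qed
    have "\<bar>S - c * W\<bar> = \<bar>\<Sum>n\<in>I. (w n * g n - c * w n)\<bar>"
      by (simp add: S_def W_def sum_subtractf sum_distrib_left)
    also have "\<dots> \<le> (\<Sum>n\<in>I. \<bar>w n * g n - c * w n\<bar>)" by (rule sum_abs)
    also have "\<dots> \<le> (\<Sum>n\<in>I. e/4 * w n + K * (if P m n then 0 else w n))"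
      by (rule sum_mono) (rule pt)
    also have "\<dots> = e/4 * W + K * Wb"
    proof -
      have "(\<Sum>n\<in>I. (if P m n then 0 else w n)) = Wb"
        unfolding Wb_def I_def by (subst sum.inter_filter) (auto intro!: sum.cong)
      moreover have "(\<Sum>n\<in>I. e/4 * w n) = e/4 * W" by (simp add: W_def sum_distrib_left)
      ultimately show ?thesis by (simp add: sum.distrib sum_distrib_left[symmetric])
    qed
    finally have main: "\<bar>S - c * W\<bar> \<le> e/4 * W + K * Wb" .
    have Dk: "D k > 0" by (rule Dpos)
    have "(1 / D k) * S - c = (S - c * W) / D k + c * (W / D k - 1)"
      using Dk by (simp add: field_simps)
    then have "\<bar>(1 / D k) * S - c\<bar> \<le> \<bar>(S - c * W) / D k\<bar> + \<bar>c * (W / D k - 1)\<bar>"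
      by (simp only: abs_triangle_ineq)
    also have "\<dots> = \<bar>S - c * W\<bar> / D k + \<bar>c\<bar> * \<bar>W / D k - 1\<bar>"
      using Dk by (simp add: abs_mult abs_divide)
    also have "\<dots> \<le> (e/4 * W + K * Wb) / D k + \<bar>c\<bar> * d"
      using main Dk r by (intro add_mono divide_right_mono mult_left_mono) auto
    also have "\<dots> = e/4 * (W / D k) + K * (Wb / D k) + \<bar>c\<bar> * d"
      by (simp add: add_divide_distrib)
    also have "\<dots> \<le> e/4 * (1 + d) + K * d + \<bar>c\<bar> * d"
    proof -
      have r': "W / D k \<le> 1 + d" using abs_ge_self[of "W / D k - 1"] r by linarith
      have s': "Wb / D k \<le> d" using abs_ge_self[of "Wb / D k"] s by linarith
      have "e/4 * (W / D k) \<le> e/4 * (1 + d)" using r' e by (intro mult_left_mono) auto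
      moreover have "K * (Wb / D k) \<le> K * d" using s' K by (intro mult_left_mono) auto
      ultimately show ?thesis by linarith
    qed
    also have "\<dots> < e"
    proof -
      have "d \<le> 1" by (simp add: d_def)
      have Kc: "K + \<bar>c\<bar> + 1 > 0" using K by simp
      have "d \<le> e / (4 * (K + \<bar>c\<bar> + 1))" unfolding d_def by (rule min.cobounded2)
      then have "d * (K + \<bar>c\<bar> + 1) \<le> e / (4 * (K + \<bar>c\<bar> + 1)) * (K + \<bar>c\<bar> + 1)"
        using Kc by (intro mult_right_mono) auto
      also have "\<dots> = e / 4"
      proof -
        have gen: "\<And>X::real. X > 0 \<Longrightarrow> e / (4 * X) * X = e / 4" by (simp add: field_simps)
        show ?thesis by (rule gen[OF Kc])
      qed
      finally have "d * (K + \<bar>c\<bar> + 1) \<le> e / 4" .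
      moreover have h1: "d * (K + \<bar>c\<bar> + 1) = K * d + \<bar>c\<bar> * d + d" by (simp add: algebra_simps)
      moreover have h2: "e/4 * (1 + d) = e/4 + (e * d)/4" by (simp add: algebra_simps)
      moreover have h3: "e * d \<le> e" using \<open>d \<le> 1\<close> e by (simp add: mult_left_le)
      ultimately show ?thesis using d e by linarith
    qed
    finally show ?case by (simp add: dist_real_def S_def I_def)
  qed
qed

lemma closed_single: "closed {z :: cantor}"
proof -
  have "{z} = (\<Inter>i. {y::cantor. y i = z i})" by auto
  moreover have "closed {y::cantor. y i = z i}" for i
    by (rule closed_Collect_eq) (auto intro: continuous_intros)
  ultimately show ?thesis by auto
qed

lemma open_coord: "open {y :: cantor. y 0}"
proof -
  have "open {y::cantor. \<forall>i\<in>{0::nat}. y (id i) \<in> {True}}"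
    by (rule product_topology_basis') (auto intro: discrete_topology_class.open_discrete)
  then show ?thesis by simp
qed

lemma cont_coord: "continuous_on UNIV (\<lambda>y::cantor. if y 0 then 1 else (0::real))"
proof -
  have "(\<lambda>y::cantor. if y 0 then 1 else (0::real)) = (\<lambda>b. if b then 1 else 0) \<circ> (\<lambda>y. y 0)"
    by auto
  moreover have "continuous_on UNIV (\<lambda>b::bool. if b then 1 else (0::real))"
    by (simp add: continuous_on_discrete)
  ultimately show ?thesis
    by (metis continuous_on_compose continuous_on_product_coordinates continuous_on_subset subset_UNIV)
qed

abbreviation SA :: "cantor measure measure" where "SA \<equiv> subprob_algebra borel"

lemma dirac_space: "return borel (z::cantor) \<in> space SA"
  by (simp add: space_subprob_algebra subprob_space_return)

lemma single_sets: "{z::cantor} \<in> sets borel"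
  using closed_single borel_closed by blast

lemma ergodic_dirac:
  assumes "shift z = z"
  shows "ergodic_measure (return borel z)"
  unfolding ergodic_measure_def invariant_measure_def borel_prob_def
proof (intro conjI ballI impI)
  show "prob_space (return borel z)" by (simp add: prob_space_return)
  show "sets (return borel z) = sets borel" by simp
  fix A :: "cantor set" assume A: "A \<in> sets borel"
  have "shift -` A \<inter> space borel \<in> sets borel" using measurable_sets[OF shift_meas A] .
  then have sA: "shift -` A \<in> sets borel" by simp
  show "emeasure (return borel z) (shift -` A) = emeasure (return borel z) A"
    using A sA assms by (simp add: emeasure_return indicator_def)
next
  fix A :: "cantor set" assume A: "A \<in> sets borel"
  show "emeasure (return borel z) A = 0 \<or> emeasure (return borel z) A = 1"
    using A by (simp add: emeasure_return indicator_def)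
qed

lemma unique_dirac:
  assumes mu: "\<mu> \<in> space SA" and one: "emeasure \<mu> {z} = 1"
  shows "\<mu> = return borel z"
proof (rule measure_eqI)
  have sp: "subprob_space \<mu>" and se: "sets \<mu> = sets borel" using mu by (auto simp: space_subprob_algebra)
  show "sets \<mu> = sets (return borel z)" using se by simp
  fix A assume A: "A \<in> sets \<mu>"
  have le1: "emeasure \<mu> B \<le> 1" for B by (rule subprob_space.subprob_emeasure_le_1[OF sp])
  show "emeasure \<mu> A = emeasure (return borel z) A"
  proof (cases "z \<in> A")
    case True
    have "emeasure \<mu> {z} \<le> emeasure \<mu> A" using A True by (intro emeasure_mono) auto
    then have "emeasure \<mu> A = 1" using le1[of A] one by (intro order.antisym) simp_all
    then show ?thesis using A se True by (simp add: emeasure_return)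
  next
    case False
    have zs: "{z} \<in> sets \<mu>" using se single_sets by simp
    have "emeasure \<mu> (A \<union> {z}) = emeasure \<mu> A + emeasure \<mu> {z}"
      using A zs False by (intro plus_emeasure[symmetric]) auto
    then have "1 + emeasure \<mu> A \<le> 1 + 0" using le1[of "A \<union> {z}"] one by (simp only: add.commute add_0_right)
    then have "emeasure \<mu> A \<le> 0" unfolding ennreal_add_left_cancel_le by simp
    then show ?thesis using A se False by (simp add: emeasure_return)
  qed
qed

lemma decomp_dirac:
  assumes "shift z = z"
  shows "ergodic_decomposition (return borel z) (return SA (return borel z))"
  unfolding ergodic_decomposition_def
proof (intro conjI)
  show "sets (return SA (return borel z)) = sets SA" by simp
  show "prob_space (return SA (return borel z))" using dirac_space by (simp add: prob_space_return)
  have pr: "Measurable.pred SA (\<lambda>\<mu>. emeasure \<mu> {z} = 1)"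
    by (rule pred_eq_const1[OF measurable_emeasure_subprob_algebra[OF single_sets]]) simp
  have "AE \<mu> in return SA (return borel z). emeasure \<mu> {z} = 1"
    using AE_return[OF dirac_space[of z] pr] by (simp add: emeasure_return single_sets)
  moreover have "AE \<mu> in return SA (return borel z). \<mu> \<in> space SA"
    using AE_space[of "return SA (return borel z)"] by simp
  ultimately show "AE \<mu> in return SA (return borel z). ergodic_measure \<mu>"
  proof eventually_elim
    case (elim \<mu>)
    then have "\<mu> = return borel z" by (intro unique_dirac) auto
    then show ?case using ergodic_dirac[OF assms] by simp
  qed
  show "join (return SA (return borel z)) = return borel z"
    by (rule join_return) (auto simp: subprob_space_return)
qed

lemma weak_supp_dirac:
  assumes d: "\<delta> \<in> space SA"
  shows "in_weak_support (return SA \<delta>) \<delta>"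
  unfolding in_weak_support_def
proof (intro allI impI)
  fix F :: "(cantor \<Rightarrow> real) set" and e :: real
  assume H: "finite F \<and> (\<forall>f\<in>F. continuous_on UNIV f) \<and> e > 0"
  define S where "S = {\<eta> \<in> space (return SA \<delta>). \<forall>f\<in>F. \<bar>integral\<^sup>L \<eta> f - integral\<^sup>L \<delta> f\<bar> < e}"
  have meas: "S \<in> sets SA"
  proof -
    have "{\<eta> \<in> space SA. \<forall>f\<in>F. \<bar>integral\<^sup>L \<eta> f - integral\<^sup>L \<delta> f\<bar> < e} \<in> sets SA"
    proof (rule sets.sets_Collect_finite_All)
      show "finite F" using H by simp
      fix f assume f: "f \<in> F"
      then have [measurable]: "f \<in> borel_measurable borel"
        using H borel_measurable_continuous_onI by blast
      show "{\<eta> \<in> space SA. \<bar>integral\<^sup>L \<eta> f - integral\<^sup>L \<delta> f\<bar> < e} \<in> sets SA"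
        by measurable
    qed
    then show ?thesis by (simp add: S_def)
  qed
  have "\<delta> \<in> S" using d H by (simp add: S_def)
  then have "emeasure (return SA \<delta>) S = 1" using meas by (simp add: emeasure_return)
  then show "emeasure (return SA \<delta>) S > 0" by simp
qed

lemma coord_sets: "{y::cantor. y 0} \<in> sets borel"
  by (rule borel_open[OF open_coord])

lemma coord_ind: "(\<lambda>y::cantor. if y 0 then 1 else (0::real)) = indicator {y. y 0}"
  by (auto simp: indicator_def)

lemma not_in_comp:
  assumes nu: "borel_prob \<nu>"
    and intf: "integral\<^sup>L \<nu> (\<lambda>y::cantor. if y 0 then 1 else (0::real)) = 0"
    and P: "ergodic_decomposition \<nu> P"
  shows "\<not> in_weak_support P (return borel (\<lambda>_. True))"
proof
  assume ws: "in_weak_support P (return borel (\<lambda>_. True))"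
  define A where "A = {y::cantor. y 0}"
  define f where "f = (\<lambda>y::cantor. if y 0 then 1 else (0::real))"
  have A: "A \<in> sets borel" using coord_sets by (simp add: A_def)
  have fA: "f = indicator A" using coord_ind by (simp add: f_def A_def)
  have fc: "continuous_on UNIV f" using cont_coord by (simp add: f_def)
  have fm: "f \<in> borel_measurable borel" by (rule borel_measurable_continuous_onI[OF fc])
  have ps: "prob_space \<nu>" and snu: "sets \<nu> = sets borel" using nu by (auto simp: borel_prob_def)
  have spn: "space \<nu> = UNIV" using sets_eq_imp_space_eq[OF snu] by simp
  have "integral\<^sup>L \<nu> f = measure \<nu> A"
    unfolding fA using spn by simp
  then have "measure \<nu> A = 0" using intf by (simp add: f_def)
  then have e0: "emeasure \<nu> A = 0" using ps A snu by (simp add: finite_measure.emeasure_eq_measure prob_space_def)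
  have sP: "join P = \<nu>" using P by (auto simp: ergodic_decomposition_def)
  have sP': "sets P = sets SA" using P by (simp add: ergodic_decomposition_def)
  have "emeasure (join P) A = (\<integral>\<^sup>+ M'. emeasure M' A \<partial>P)"
    by (rule emeasure_join[OF sP' A])
  then have int0: "(\<integral>\<^sup>+ M'. emeasure M' A \<partial>P) = 0" using e0 sP by simp
  have mA: "(\<lambda>M'. emeasure M' A) \<in> borel_measurable P"
    using measurable_emeasure_subprob_algebra[OF A] unfolding measurable_cong_sets[OF sP' refl] .
  have AE0: "AE M' in P. emeasure M' A = 0"
    using int0 nn_integral_0_iff_AE[OF mA] by simp
  have i1: "integral\<^sup>L (return borel (\<lambda>_. True)) f = 1"
    using fm by (simp add: integral_return f_def)
  define S where "S = {\<eta> \<in> space P. \<forall>g\<in>{f}. \<bar>integral\<^sup>L \<eta> g - integral\<^sup>L (return borel (\<lambda>_. True)) g\<bar> < 1/2}"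
  have hyp: "finite {f} \<and> (\<forall>g\<in>{f}. continuous_on UNIV g) \<and> (1/2::real) > 0" using fc by simp
  have pos: "emeasure P S > 0"
    using ws[unfolded in_weak_support_def, rule_format, OF hyp] unfolding S_def .
  have Ss: "S \<in> sets P"
  proof (rule ccontr)
    assume "S \<notin> sets P"
    then have "emeasure P S = 0" by (rule emeasure_notin_sets)
    then show False using pos by simp
  qed
  have AEn: "AE \<eta> in P. \<eta> \<notin> S"
    using AE0
  proof (rule AE_mp)
    show "AE \<eta> in P. emeasure \<eta> A = 0 \<longrightarrow> \<eta> \<notin> S"
    proof (rule AE_I2, intro impI)
      fix \<eta> assume eta: "\<eta> \<in> space P" "emeasure \<eta> A = 0"
      then have "\<eta> \<in> space SA" using sets_eq_imp_space_eq[OF sP'] by simp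
      then have sub: "subprob_space \<eta>" and se: "sets \<eta> = sets borel" by (auto simp: space_subprob_algebra)
      have spe: "space \<eta> = UNIV" using sets_eq_imp_space_eq[OF se] by simp
      have "integral\<^sup>L \<eta> f = measure \<eta> A"
        unfolding fA using spe by simp
      also have "\<dots> = 0" using eta(2) by (simp add: measure_def)
      finally show "\<eta> \<notin> S" using i1 by (simp add: S_def)
    qed
  qed
  have eqS: "{\<eta>\<in>space P. \<not> \<eta> \<notin> S} = S" using sets.sets_into_space[OF Ss] by auto
  have "emeasure P S = 0" using AE_iff_measurable[OF Ss eqS, THEN iffD1, OF AEn] .
  then show False using pos by simp
qed

definition aa :: "nat \<Rightarrow> nat" where "aa k = 4 ^ (k ^ 4)"

definition xs :: cantor where "xs j \<longleftrightarrow> (\<exists>k. aa k \<le> j \<and> j < k * aa k)"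

lemma aa_pos: "aa k \<ge> 1"
  by (simp add: aa_def)

lemma pow4_step: "k ^ 4 + (k + 1) \<le> (Suc k) ^ 4"
proof -
  have "(Suc k) ^ 4 = k^4 + 4*k^3 + 6*k^2 + 4*k + 1" by (simp add: power_def algebra_simps eval_nat_numeral)
  then show ?thesis by simp
qed

lemma aa_step: "4 ^ (k + 1) * aa k \<le> aa (Suc k)"
proof -
  have "4 ^ (k + 1) * aa k = (4::nat) ^ (k ^ 4 + (k + 1))" by (simp add: aa_def power_add)
  also have "\<dots> \<le> 4 ^ (Suc k ^ 4)" by (rule power_increasing[OF pow4_step]) simp
  finally show ?thesis by (simp add: aa_def)
qed

lemma k_le_pow: "k \<le> (4::nat) ^ (k + 1)"
proof -
  have "k < 2 ^ k" by (rule less_exp)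
  also have "(2::nat) ^ k \<le> 4 ^ k" by (simp add: power_mono)
  also have "(4::nat) ^ k \<le> 4 ^ (k+1)" by simp
  finally show ?thesis by simp
qed

lemma aa_block: "k * aa k \<le> aa (Suc k)"
  using aa_step[of k] k_le_pow[of k] by (meson le_trans mult_le_mono1)

lemma aa_mono_strict: "strict_mono aa"
proof (rule strict_monoI_Suc)
  fix k
  have c1: "(1::nat) < 4 ^ (k + 1)" by (rule one_less_power) auto
  have "1 * aa k < 4 ^ (k + 1) * aa k" by (rule mult_less_mono1[OF c1]) (use aa_pos[of k] in simp)
  then have "aa k < 4 ^ (k + 1) * aa k" by simp
  then show "aa k < aa (Suc k)" using aa_step[of k] by linarith
qed

lemma aa_mono: "k \<le> k' \<Longrightarrow> aa k \<le> aa k'"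
  using aa_mono_strict by (simp add: strict_mono_less_eq)

lemma xs_before:
  assumes "xs j" "j < aa (Suc k)"
  shows "j < k * aa k"
proof -
  obtain k' where k': "aa k' \<le> j" "j < k' * aa k'" using assms(1) by (auto simp: xs_def)
  have "k' \<le> k"
  proof (rule ccontr)
    assume "\<not> k' \<le> k"
    then have "aa (Suc k) \<le> aa k'" by (intro aa_mono) simp
    then show False using k' assms by simp
  qed
  then have "k' * aa k' \<le> k * aa k" by (intro mult_le_mono aa_mono) auto
  then show ?thesis using k' by simp
qed

lemma xs_in: "aa k \<le> j \<Longrightarrow> j < k * aa k \<Longrightarrow> xs j"
  by (auto simp: xs_def)

lemma card_le_m: "card {n \<in> {1..T::nat}. T < n + m} \<le> m"
proof -
  have "{n \<in> {1..T::nat}. T < n + m} \<subseteq> {T + 1 - m..T}" by auto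
  then have "card {n \<in> {1..T::nat}. T < n + m} \<le> card {T + 1 - m..T}" by (intro card_mono) auto
  also have "\<dots> \<le> m" by simp
  finally show ?thesis .
qed

lemma card_bad_zero:
  "card {n \<in> {1..aa (Suc k)}. \<not> (\<forall>i<m. xs (i + (n - 1)) = False)} \<le> k * aa k + m"
proof -
  let ?T = "aa (Suc k)"
  have "{n \<in> {1..?T}. \<not> (\<forall>i<m. xs (i + (n - 1)) = False)} \<subseteq> {1..k * aa k} \<union> {n \<in> {1..?T}. ?T < n + m}"
  proof
    fix n assume "n \<in> {n \<in> {1..?T}. \<not> (\<forall>i<m. xs (i + (n - 1)) = False)}"
    then obtain i where n: "1 \<le> n" "n \<le> ?T" and i: "i < m" "xs (i + (n - 1))" by auto
    show "n \<in> {1..k * aa k} \<union> {n \<in> {1..?T}. ?T < n + m}"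
    proof (cases "i + (n - 1) < ?T")
      case True
      then have "i + (n - 1) < k * aa k" using xs_before i by blast
      then show ?thesis using n by auto
    next
      case False
      then show ?thesis using n i by auto
    qed
  qed
  then have "card {n \<in> {1..?T}. \<not> (\<forall>i<m. xs (i + (n - 1)) = False)} \<le> card ({1..k * aa k} \<union> {n \<in> {1..?T}. ?T < n + m})"
    by (intro card_mono) auto
  also have "\<dots> \<le> card {1..k * aa k} + card {n \<in> {1..?T}. ?T < n + m}" by (rule card_Un_le)
  also have "\<dots> \<le> k * aa k + m" using card_le_m[of ?T m] by simp
  finally show ?thesis .
qed

lemma card_bad_one:
  "card {n \<in> {1..Suc k * aa (Suc k)}. \<not> (\<forall>i<m. xs (i + (n - 1)) = True)} \<le> aa (Suc k) + m"
proof -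
  let ?T = "Suc k * aa (Suc k)"
  have "{n \<in> {1..?T}. \<not> (\<forall>i<m. xs (i + (n - 1)) = True)} \<subseteq> {1..aa (Suc k)} \<union> {n \<in> {1..?T}. ?T < n + m}"
  proof
    fix n assume "n \<in> {n \<in> {1..?T}. \<not> (\<forall>i<m. xs (i + (n - 1)) = True)}"
    then obtain i where n: "1 \<le> n" "n \<le> ?T" and i: "i < m" "\<not> xs (i + (n - 1))" by auto
    show "n \<in> {1..aa (Suc k)} \<union> {n \<in> {1..?T}. ?T < n + m}"
    proof (cases "i + (n - 1) < ?T")
      case True
      then have "i + (n - 1) < aa (Suc k)" using xs_in[of "Suc k" "i + (n - 1)"] i by linarith
      then show ?thesis using n by auto
    next
      case False
      then show ?thesis using n i by auto
    qed
  qed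
  then have "card {n \<in> {1..?T}. \<not> (\<forall>i<m. xs (i + (n - 1)) = True)} \<le> card ({1..aa (Suc k)} \<union> {n \<in> {1..?T}. ?T < n + m})"
    by (intro card_mono) auto
  also have "\<dots> \<le> card {1..aa (Suc k)} + card {n \<in> {1..?T}. ?T < n + m}" by (rule card_Un_le)
  also have "\<dots> \<le> aa (Suc k) + m" using card_le_m[of ?T m] by simp
  finally show ?thesis .
qed

lemma frac_bound:
  fixes C p A m q B :: real
  assumes "0 \<le> C" "C \<le> p * A + m" "q * A \<le> B" "1 \<le> A" "0 < q" "0 \<le> p" "0 \<le> m"
  shows "C / B \<le> (p + m) / q"
proof -
  have A0: "A > 0" using assms(4) by simp
  have qA: "q * A > 0" using A0 assms(5) by simp
  have "m \<le> m * A" using mult_left_mono[OF assms(4) assms(7)] by simp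
  then have C1: "C \<le> (p + m) * A" using assms(2) by (simp add: distrib_right)
  have "C / B \<le> C / (q * A)" using assms(1,3) qA by (intro divide_left_mono) auto
  also have "\<dots> \<le> (p + m) * A / (q * A)" using C1 qA by (intro divide_right_mono) auto
  also have "\<dots> = (p + m) / q" using A0 by simp
  finally show ?thesis .
qed

lemma lim1: "(\<lambda>k. (real k + real m) / 4 ^ (k + 1)) \<longlonglongrightarrow> 0"
  by real_asymp

lemma lim2: "(\<lambda>k. (1 + real m) / (real k + 1)) \<longlonglongrightarrow> 0"
  by real_asymp

lemma ratio_zero:
  "(\<lambda>k. real (card {n \<in> {1..aa (Suc k)}. \<not> (\<forall>i<m. xs (i + (n - 1)) = False)}) / real (aa (Suc k))) \<longlonglongrightarrow> 0"
proof (rule tendsto_sandwich[OF _ _ tendsto_const lim1[of m]])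
  show "\<forall>\<^sub>F k in sequentially. 0 \<le> real (card {n \<in> {1..aa (Suc k)}. \<not> (\<forall>i<m. xs (i + (n - 1)) = False)}) / real (aa (Suc k))"
    by simp
  show "\<forall>\<^sub>F k in sequentially. real (card {n \<in> {1..aa (Suc k)}. \<not> (\<forall>i<m. xs (i + (n - 1)) = False)}) / real (aa (Suc k)) \<le> (real k + real m) / 4 ^ (k + 1)"
  proof (rule always_eventually, rule allI)
    fix k
    have c: "real (card {n \<in> {1..aa (Suc k)}. \<not> (\<forall>i<m. xs (i + (n - 1)) = False)}) \<le> real k * real (aa k) + real m"
    proof -
      have "real (card {n \<in> {1..aa (Suc k)}. \<not> (\<forall>i<m. xs (i + (n - 1)) = False)}) \<le> real (k * aa k + m)"
        using card_bad_zero[of k m] by (simp only: of_nat_le_iff)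
      then show ?thesis by simp
    qed
    have s: "4 ^ (k + 1) * real (aa k) \<le> real (aa (Suc k))"
    proof -
      have "real (4 ^ (k + 1) * aa k) \<le> real (aa (Suc k))" using aa_step[of k] by (simp only: of_nat_le_iff)
      then show ?thesis by simp
    qed
    have a1: "1 \<le> real (aa k)" using aa_pos[of k] by simp
    show "real (card {n \<in> {1..aa (Suc k)}. \<not> (\<forall>i<m. xs (i + (n - 1)) = False)}) / real (aa (Suc k)) \<le> (real k + real m) / 4 ^ (k + 1)"
      by (rule frac_bound[OF _ c s a1]) auto
  qed
qed

lemma ratio_one:
  "(\<lambda>k. real (card {n \<in> {1..Suc k * aa (Suc k)}. \<not> (\<forall>i<m. xs (i + (n - 1)) = True)}) / real (Suc k * aa (Suc k))) \<longlonglongrightarrow> 0"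
proof (rule tendsto_sandwich[OF _ _ tendsto_const lim2[of m]])
  show "\<forall>\<^sub>F k in sequentially. 0 \<le> real (card {n \<in> {1..Suc k * aa (Suc k)}. \<not> (\<forall>i<m. xs (i + (n - 1)) = True)}) / real (Suc k * aa (Suc k))"
    by simp
  show "\<forall>\<^sub>F k in sequentially. real (card {n \<in> {1..Suc k * aa (Suc k)}. \<not> (\<forall>i<m. xs (i + (n - 1)) = True)}) / real (Suc k * aa (Suc k)) \<le> (1 + real m) / (real k + 1)"
  proof (rule always_eventually, rule allI)
    fix k
    have c: "real (card {n \<in> {1..Suc k * aa (Suc k)}. \<not> (\<forall>i<m. xs (i + (n - 1)) = True)}) \<le> 1 * real (aa (Suc k)) + real m"
    proof -
      have "real (card {n \<in> {1..Suc k * aa (Suc k)}. \<not> (\<forall>i<m. xs (i + (n - 1)) = True)}) \<le> real (aa (Suc k) + m)"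
        using card_bad_one[of k m] by (simp only: of_nat_le_iff)
      then show ?thesis by simp
    qed
    have s: "(real k + 1) * real (aa (Suc k)) \<le> real (Suc k * aa (Suc k))" by (simp add: algebra_simps)
    have a1: "1 \<le> real (aa (Suc k))" using aa_pos[of "Suc k"] by simp
    show "real (card {n \<in> {1..Suc k * aa (Suc k)}. \<not> (\<forall>i<m. xs (i + (n - 1)) = True)}) / real (Suc k * aa (Suc k)) \<le> (1 + real m) / (real k + 1)"
      by (rule frac_bound[OF _ c s a1]) auto
  qed
qed

definition hh :: "nat \<Rightarrow> real" where "hh j = (if xs j then 1 / (real j + 1) else 0)"
definition HH :: "nat \<Rightarrow> real" where "HH M = (\<Sum>j<M. hh j)"

lemma hh_nonneg: "hh j \<ge> 0" by (simp add: hh_def)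

lemma ln4_ge1: "1 \<le> ln (4::real)"
proof -
  have "exp 1 \<le> (4::real)" using exp_le by simp
  then have "ln (exp 1) \<le> ln (4::real)" by (subst ln_le_cancel_iff) auto
  then show ?thesis by simp
qed

lemma aa_small:
  assumes "aa k < M"
  shows "real k \<le> sqrt (sqrt (ln (real M)))"
proof -
  have "ln (real (aa k)) = real (k ^ 4) * ln 4" by (simp add: aa_def ln_realpow)
  moreover have "real (k ^ 4) \<le> real (k ^ 4) * ln 4" using ln4_ge1 by (simp add: mult_le_cancel_left1)
  moreover have "ln (real (aa k)) \<le> ln (real M)" using assms aa_pos[of k] by simp
  ultimately have k4: "real k ^ 4 \<le> ln (real M)" by simp
  have e4: "real k ^ 4 = (real k ^ 2) ^ 2" by (simp flip: power_mult)
  have "real k = sqrt (sqrt (real k ^ 4))"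
    unfolding e4 real_sqrt_abs by simp
  also have "\<dots> \<le> sqrt (sqrt (ln (real M)))" using k4 by simp
  finally show ?thesis .
qed

lemma sum_if_lt:
  fixes c :: real
  assumes "c \<ge> 0"
  shows "(\<Sum>j<M. if j < L then c else 0) \<le> real L * c"
proof -
  have "(\<Sum>j<M. if j < L then c else 0) = (\<Sum>j<M. if j \<in> {..<L} then c else 0)" by simp
  also have "\<dots> = (\<Sum>j\<in>{..<M} \<inter> {..<L}. c)"
    by (simp only: sum.inter_restrict[OF finite_lessThan])
  also have "\<dots> \<le> (\<Sum>j\<in>{..<L}. c)" using assms by (intro sum_mono2) auto
  also have "\<dots> = real L * c" by simp
  finally show ?thesis .
qed

lemma HH_bound:
  assumes M: "M \<ge> 1"
  shows "HH M \<le> sqrt (ln (real M)) + sqrt (sqrt (ln (real M)))"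
proof -
  define r where "r = sqrt (sqrt (ln (real M)))"
  have r0: "r \<ge> 0" using M by (simp add: r_def)
  define S where "S = {k. aa k < M}"
  have aak: "k \<le> aa k" for k using strict_mono_imp_increasing[OF aa_mono_strict] by simp
  have Ssub: "S \<subseteq> {..<M}"
  proof
    fix k assume "k \<in> S"
    then have "aa k < M" by (simp add: S_def)
    then show "k \<in> {..<M}" using aak[of k] by simp
  qed
  have finS: "finite S" by (rule finite_subset[OF Ssub finite_lessThan])
  have Sr: "real k \<le> r" if "k \<in> S" for k using aa_small that by (simp add: S_def r_def)
  define g where "g k j = (if aa k \<le> j \<and> j < k * aa k then 1 / real (aa k) else 0)" for k j
  have g0: "g k j \<ge> 0" for k j by (simp add: g_def)
  have pt: "hh j \<le> (\<Sum>k\<in>S. g k j)" if "j < M" for j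
  proof (cases "xs j")
    case True
    then obtain k0 where k0: "aa k0 \<le> j" "j < k0 * aa k0" by (auto simp: xs_def)
    have k0S: "k0 \<in> S" using k0 that by (simp add: S_def)
    have "hh j = 1 / (real j + 1)" using True by (simp add: hh_def)
    also have "\<dots> \<le> 1 / real (aa k0)" using k0 aa_pos[of k0] by (intro divide_left_mono) auto
    also have "\<dots> = g k0 j" using k0 by (simp add: g_def)
    also have "\<dots> \<le> (\<Sum>k\<in>S. g k j)" using finS k0S g0 by (intro member_le_sum) auto
    finally show ?thesis .
  next
    case False
    then show ?thesis using g0 by (simp add: hh_def sum_nonneg)
  qed
  have "HH M \<le> (\<Sum>j<M. \<Sum>k\<in>S. g k j)" unfolding HH_def by (intro sum_mono pt) simp
  also have "\<dots> = (\<Sum>k\<in>S. \<Sum>j<M. g k j)" by (rule sum.swap)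
  also have "\<dots> \<le> (\<Sum>k\<in>S. r)"
  proof (rule sum_mono)
    fix k assume kS: "k \<in> S"
    have "(\<Sum>j<M. g k j) \<le> (\<Sum>j<M. if j < k * aa k then 1 / real (aa k) else 0)"
      by (intro sum_mono) (auto simp: g_def)
    also have "\<dots> \<le> real (k * aa k) * (1 / real (aa k))" by (rule sum_if_lt) simp
    also have "\<dots> = real k" using aa_pos[of k] by simp
    also have "\<dots> \<le> r" using Sr kS by simp
    finally show "(\<Sum>j<M. g k j) \<le> r" .
  qed
  also have "\<dots> = real (card S) * r" by simp
  also have "\<dots> \<le> (r + 1) * r"
  proof -
    have "S \<subseteq> {..nat \<lfloor>r\<rfloor>}"
    proof
      fix k assume "k \<in> S"
      then have "real k \<le> r" by (rule Sr)
      then have "k \<le> nat \<lfloor>r\<rfloor>" by (simp add: le_nat_floor)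
      then show "k \<in> {..nat \<lfloor>r\<rfloor>}" by simp
    qed
    then have "card S \<le> card {..nat \<lfloor>r\<rfloor>}" by (intro card_mono) auto
    then have "real (card S) \<le> real (nat \<lfloor>r\<rfloor>) + 1" by simp
    also have "\<dots> \<le> r + 1" using r0 by simp
    finally show ?thesis using r0 by (intro mult_right_mono) auto
  qed
  also have "\<dots> = sqrt (ln (real M)) + r"
  proof -
    have "r * r = sqrt (ln (real M))" using M by (simp add: r_def)
    then show ?thesis by (simp add: algebra_simps)
  qed
  finally show ?thesis by (simp add: r_def)
qed

lemma nat_ineq: "i < m \<Longrightarrow> 1 \<le> n \<Longrightarrow> i + n \<le> m * (n::nat)"
proof -
  assume a: "i < m" "1 \<le> n"
  obtain m' where m: "m = Suc m'" using a(1) by (cases m) auto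
  have "i \<le> m'" using a(1) m by simp
  also have "m' \<le> m' * n" using a(2) by simp
  finally have "i + n \<le> m' * n + n" by simp
  then show ?thesis using m by simp
qed

lemma inner_bound:
  assumes "i < m"
  shows "(\<Sum>n\<in>{1..N}. hh (i + (n - 1))) \<le> HH (N + m)"
proof -
  have inj: "inj_on (\<lambda>n. i + (n - 1)) {1..N}" by (auto simp: inj_on_def)
  have "(\<Sum>n\<in>{1..N}. hh (i + (n - 1))) = (\<Sum>j\<in>(\<lambda>n. i + (n - 1)) ` {1..N}. hh j)"
    using sum.reindex[OF inj, of hh] by (simp add: comp_def)
  also have "\<dots> \<le> (\<Sum>j\<in>{..<N + m}. hh j)"
    using assms by (intro sum_mono2) (auto simp: hh_nonneg)
  finally show ?thesis by (simp add: HH_def)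
qed

lemma bad_log_sum:
  "(\<Sum>n\<in>{n\<in>{1..N}. \<not> (\<forall>i<m. xs (i + (n - 1)) = False)}. 1 / real n) \<le> real m * real m * HH (N + m)"
proof -
  have "(\<Sum>n\<in>{n\<in>{1..N}. \<not> (\<forall>i<m. xs (i + (n - 1)) = False)}. 1 / real n)
      = (\<Sum>n\<in>{1..N}. if \<not> (\<forall>i<m. xs (i + (n - 1)) = False) then 1 / real n else 0)"
    by (rule sum.inter_filter) simp
  also have "\<dots> \<le> (\<Sum>n\<in>{1..N}. \<Sum>i<m. real m * hh (i + (n - 1)))"
  proof (rule sum_mono)
    fix n assume n: "n \<in> {1..N}"
    show "(if \<not> (\<forall>i<m. xs (i + (n - 1)) = False) then 1 / real n else 0) \<le> (\<Sum>i<m. real m * hh (i + (n - 1)))"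
    proof (cases "\<forall>i<m. xs (i + (n - 1)) = False")
      case True
      then show ?thesis by (simp add: sum_nonneg hh_nonneg)
    next
      case False
      then obtain i0 where i0: "i0 < m" "xs (i0 + (n - 1))" by auto
      have n1: "1 \<le> n" using n by simp
      have e: "real (i0 + (n - 1)) + 1 = real i0 + real n" using n1 by (simp add: of_nat_diff)
      have le: "real i0 + real n \<le> real m * real n"
      proof -
        have "i0 + n \<le> m * n" by (rule nat_ineq[OF i0(1) n1])
        then have "real (i0 + n) \<le> real (m * n)" by (simp only: of_nat_le_iff)
        then show ?thesis by simp
      qed
      have pos: "real i0 + real n > 0" using n1 by simp
      have "1 / real n \<le> real m / (real i0 + real n)"
        using le pos n1 by (simp add: field_simps)
      also have "\<dots> = real m * hh (i0 + (n - 1))" using i0(2) e by (simp add: hh_def)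
      also have "\<dots> \<le> (\<Sum>i<m. real m * hh (i + (n - 1)))"
        using i0(1) by (intro member_le_sum) (auto simp: hh_nonneg)
      finally show ?thesis using False by simp
    qed
  qed
  also have "\<dots> = (\<Sum>i<m. \<Sum>n\<in>{1..N}. real m * hh (i + (n - 1)))" by (rule sum.swap)
  also have "\<dots> \<le> (\<Sum>i<m. real m * HH (N + m))"
  proof (rule sum_mono)
    fix i assume "i \<in> {..<m}"
    then have "(\<Sum>n\<in>{1..N}. hh (i + (n - 1))) \<le> HH (N + m)" by (intro inner_bound) simp
    then show "(\<Sum>n\<in>{1..N}. real m * hh (i + (n - 1))) \<le> real m * HH (N + m)"
      by (simp add: sum_distrib_left[symmetric] mult_left_mono)
  qed
  also have "\<dots> = real m * real m * HH (N + m)" by simp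
  finally show ?thesis .
qed

lemma lim3: "(\<lambda>k. real m * real m * (sqrt (ln (real k + 2 + real m)) + sqrt (sqrt (ln (real k + 2 + real m)))) / ln (real k + 2)) \<longlonglongrightarrow> 0"
  by real_asymp

lemma bad_log:
  "(\<lambda>k. (\<Sum>n\<in>{n\<in>{1..k+2}. \<not> (\<forall>i<m. xs (i + (n - 1)) = False)}. 1 / real n) / ln (real (k + 2))) \<longlonglongrightarrow> 0"
proof (rule tendsto_sandwich[OF _ _ tendsto_const lim3[of m]])
  show "\<forall>\<^sub>F k in sequentially. 0 \<le> (\<Sum>n\<in>{n\<in>{1..k+2}. \<not> (\<forall>i<m. xs (i + (n - 1)) = False)}. 1 / real n) / ln (real (k + 2))"
    by (intro always_eventually allI divide_nonneg_nonneg sum_nonneg) auto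
  show "\<forall>\<^sub>F k in sequentially. (\<Sum>n\<in>{n\<in>{1..k+2}. \<not> (\<forall>i<m. xs (i + (n - 1)) = False)}. 1 / real n) / ln (real (k + 2))
     \<le> real m * real m * (sqrt (ln (real k + 2 + real m)) + sqrt (sqrt (ln (real k + 2 + real m)))) / ln (real k + 2)"
  proof (rule always_eventually, rule allI)
    fix k
    have lnpos: "ln (real k + 2) > 0" by simp
    have "(\<Sum>n\<in>{n\<in>{1..k+2}. \<not> (\<forall>i<m. xs (i + (n - 1)) = False)}. 1 / real n) \<le> real m * real m * HH (k + 2 + m)"
      by (rule bad_log_sum)
    also have "\<dots> \<le> real m * real m * (sqrt (ln (real (k + 2 + m))) + sqrt (sqrt (ln (real (k + 2 + m)))))"
      by (intro mult_left_mono HH_bound) auto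
    also have "\<dots> = real m * real m * (sqrt (ln (real k + 2 + real m)) + sqrt (sqrt (ln (real k + 2 + real m))))"
    proof -
      have "real (k + 2 + m) = real k + 2 + real m" by simp
      then show ?thesis by (simp only:)
    qed
    finally have *: "(\<Sum>n\<in>{n\<in>{1..k+2}. \<not> (\<forall>i<m. xs (i + (n - 1)) = False)}. 1 / real n) \<le> real m * real m * (sqrt (ln (real k + 2 + real m)) + sqrt (sqrt (ln (real k + 2 + real m))))" .
    have "real (k + 2) = real k + 2" by simp
    then show "(\<Sum>n\<in>{n\<in>{1..k+2}. \<not> (\<forall>i<m. xs (i + (n - 1)) = False)}. 1 / real n) / ln (real (k + 2))
     \<le> real m * real m * (sqrt (ln (real k + 2 + real m)) + sqrt (sqrt (ln (real k + 2 + real m)))) / ln (real k + 2)"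
      using * lnpos by (simp only:) (rule divide_right_mono, auto)
  qed
qed

lemma lim4: "(\<lambda>k. 1 / ln (real k + 2)) \<longlonglongrightarrow> 0"
  by real_asymp

lemma tot_log: "(\<lambda>k. (\<Sum>n=1..k+2. 1 / real n) / ln (real (k + 2))) \<longlonglongrightarrow> 1"
proof -
  have h: "(\<lambda>k. harm (k + 2) - ln (real (k + 2)) :: real) \<longlonglongrightarrow> euler_mascheroni"
    using LIMSEQ_ignore_initial_segment[OF euler_mascheroni_LIMSEQ, of 2] by simp
  have "(\<lambda>k. 1 + (harm (k + 2) - ln (real (k + 2))) * (1 / ln (real k + 2)) :: real) \<longlonglongrightarrow> 1 + euler_mascheroni * 0"
    by (intro tendsto_intros h lim4)
  moreover have "(\<Sum>n=1..k+2. 1 / real n) / ln (real (k + 2)) = 1 + (harm (k + 2) - ln (real (k + 2))) * (1 / ln (real k + 2))" for k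
  proof -
    have lnpos: "ln (real k + 2) > 0" by simp
    have "(\<Sum>n=1..k+2. 1 / real n) = harm (k + 2)" by (simp add: harm_def inverse_eq_divide)
    then show ?thesis using lnpos by (simp add: field_simps)
  qed
  ultimately show ?thesis by simp
qed

definition z0 :: cantor where "z0 = (\<lambda>_. False)"
definition z1 :: cantor where "z1 = (\<lambda>_. True)"

lemma shift_z0: "shift z0 = z0" by (simp add: shift_def z0_def)
lemma shift_z1: "shift z1 = z1" by (simp add: shift_def z1_def)

lemma good_lemma:
  fixes f :: "cantor \<Rightarrow> real"
  assumes f: "continuous_on UNIV f" and e: "e > 0"
  shows "\<exists>m. \<forall>n. (\<forall>i<m. xs (i + (n - 1)) = z i) \<longrightarrow> \<bar>f ((shift ^^ (n - 1)) xs) - f z\<bar> \<le> e"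
proof -
  obtain m where m: "\<And>y. (\<forall>i<m. y i = z i) \<Longrightarrow> \<bar>f y - f z\<bar> < e"
    using cont_cyl[OF f e, of z] by blast
  show ?thesis
  proof (intro exI allI impI)
    fix n assume "\<forall>i<m. xs (i + (n - 1)) = z i"
    then have "\<forall>i<m. (shift ^^ (n - 1)) xs i = z i" by (simp add: shift_pow)
    then show "\<bar>f ((shift ^^ (n - 1)) xs) - f z\<bar> \<le> e" using m by (simp add: less_imp_le)
  qed
qed

lemma log_conv_shift:
  fixes f :: "cantor \<Rightarrow> real"
  assumes f: "continuous_on UNIV f"
  shows "(\<lambda>k. (1 / ln (real (k + 2))) * (\<Sum>n=1..k+2. (1 / real n) * f ((shift ^^ (n - 1)) xs))) \<longlonglongrightarrow> f z0"
proof -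
  obtain B where B: "\<And>y. \<bar>f y\<bar> \<le> B" using cont_bounded[OF f] by blast
  show ?thesis
  proof (rule weighted_avg_tendsto[where P = "\<lambda>m n. \<forall>i<m. xs (i + (n - 1)) = z0 i" and B = B])
    show "\<bar>f ((shift ^^ (n - 1)) xs)\<bar> \<le> B" for n by (rule B)
    show "0 \<le> 1 / real n" for n by simp
    show "0 < ln (real (k + 2))" for k by simp
    show "(\<lambda>k. (\<Sum>n=1..k+2. 1 / real n) / ln (real (k + 2))) \<longlonglongrightarrow> 1" by (rule tot_log)
    show "\<exists>m. \<forall>n. (\<forall>i<m. xs (i + (n - 1)) = z0 i) \<longrightarrow> \<bar>f ((shift ^^ (n - 1)) xs) - f z0\<bar> \<le> e" if "e > 0" for e
      by (rule good_lemma[OF f that])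
    show "(\<lambda>k. (\<Sum>n\<in>{n\<in>{1..k+2}. \<not> (\<forall>i<m. xs (i + (n - 1)) = z0 i)}. 1 / real n) / ln (real (k + 2))) \<longlonglongrightarrow> 0" for m
      using bad_log[of m] by (simp add: z0_def)
  qed
qed

lemma log_conv:
  fixes f :: "cantor \<Rightarrow> real"
  assumes f: "continuous_on UNIV f"
  shows "(\<lambda>N. (1 / ln (real N)) * (\<Sum>n=1..N. (1 / real n) * f ((shift ^^ (n - 1)) xs))) \<longlonglongrightarrow> f z0"
proof -
  define X where "X = (\<lambda>N. (1 / ln (real N)) * (\<Sum>n=1..N. (1 / real n) * f ((shift ^^ (n - 1)) xs)))"
  have "(\<lambda>k. X (k + 2)) \<longlonglongrightarrow> f z0" unfolding X_def using log_conv_shift[OF f] .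
  from LIMSEQ_offset[OF this] show ?thesis unfolding X_def .
qed

lemma Vlog_int:
  fixes f :: "cantor \<Rightarrow> real"
  assumes nu: "\<nu> \<in> Vlog xs" and f: "continuous_on UNIV f"
  shows "integral\<^sup>L \<nu> f = f z0"
proof -
  obtain N where N: "strict_mono N"
    and c: "\<And>f :: cantor \<Rightarrow> real. continuous_on UNIV f \<Longrightarrow>
           (\<lambda>k. (1 / ln (real (N k))) * (\<Sum>n=1..N k. (1 / real n) * f ((shift ^^ (n - 1)) xs)))
             \<longlonglongrightarrow> integral\<^sup>L \<nu> f"
    using nu unfolding Vlog_def by blast
  have "(\<lambda>k. (1 / ln (real (N k))) * (\<Sum>n=1..N k. (1 / real n) * f ((shift ^^ (n - 1)) xs))) \<longlonglongrightarrow> f z0"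
    using LIMSEQ_subseq_LIMSEQ[OF log_conv[OF f] N] by (simp add: comp_def)
  then show ?thesis using c[OF f] LIMSEQ_unique by blast
qed

lemma cesaro_zero:
  fixes f :: "cantor \<Rightarrow> real"
  assumes f: "continuous_on UNIV f"
  shows "(\<lambda>k. (1 / real (aa (Suc k))) * (\<Sum>n=1..aa (Suc k). f ((shift ^^ (n - 1)) xs))) \<longlonglongrightarrow> f z0"
proof -
  obtain B where B: "\<And>y. \<bar>f y\<bar> \<le> B" using cont_bounded[OF f] by blast
  have "(\<lambda>k. (1 / real (aa (Suc k))) * (\<Sum>n=1..aa (Suc k). 1 * f ((shift ^^ (n - 1)) xs))) \<longlonglongrightarrow> f z0"
  proof (rule weighted_avg_tendsto[where P = "\<lambda>m n. \<forall>i<m. xs (i + (n - 1)) = z0 i" and B = B])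
    show "\<bar>f ((shift ^^ (n - 1)) xs)\<bar> \<le> B" for n by (rule B)
    show "(0::real) \<le> 1" by simp
    show "0 < real (aa (Suc k))" for k using aa_pos[of "Suc k"] by simp
    have "(\<Sum>n=1..aa (Suc k). (1::real)) / real (aa (Suc k)) = 1" for k using aa_pos[of "Suc k"] by simp
    then show "(\<lambda>k. (\<Sum>n=1..aa (Suc k). (1::real)) / real (aa (Suc k))) \<longlonglongrightarrow> 1" by simp
    show "\<exists>m. \<forall>n. (\<forall>i<m. xs (i + (n - 1)) = z0 i) \<longrightarrow> \<bar>f ((shift ^^ (n - 1)) xs) - f z0\<bar> \<le> e" if "e > 0" for e
      by (rule good_lemma[OF f that])
    show "(\<lambda>k. (\<Sum>n\<in>{n\<in>{1..aa (Suc k)}. \<not> (\<forall>i<m. xs (i + (n - 1)) = z0 i)}. (1::real)) / real (aa (Suc k))) \<longlonglongrightarrow> 0" for m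
      using ratio_zero[of m] by (simp add: z0_def)
  qed
  then show ?thesis by simp
qed

lemma cesaro_one:
  fixes f :: "cantor \<Rightarrow> real"
  assumes f: "continuous_on UNIV f"
  shows "(\<lambda>k. (1 / real (Suc k * aa (Suc k))) * (\<Sum>n=1..Suc k * aa (Suc k). f ((shift ^^ (n - 1)) xs))) \<longlonglongrightarrow> f z1"
proof -
  obtain B where B: "\<And>y. \<bar>f y\<bar> \<le> B" using cont_bounded[OF f] by blast
  have "(\<lambda>k. (1 / real (Suc k * aa (Suc k))) * (\<Sum>n=1..Suc k * aa (Suc k). 1 * f ((shift ^^ (n - 1)) xs))) \<longlonglongrightarrow> f z1"
  proof (rule weighted_avg_tendsto[where P = "\<lambda>m n. \<forall>i<m. xs (i + (n - 1)) = z1 i" and B = B])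
    show "\<bar>f ((shift ^^ (n - 1)) xs)\<bar> \<le> B" for n by (rule B)
    show "(0::real) \<le> 1" by simp
    show "0 < real (Suc k * aa (Suc k))" for k
    proof -
      have "0 < Suc k * aa (Suc k)" using aa_pos[of "Suc k"] by simp
      then show ?thesis by (simp only: of_nat_0_less_iff)
    qed
    have "(\<Sum>n=1..Suc k * aa (Suc k). (1::real)) / real (Suc k * aa (Suc k)) = 1" for k
    proof -
      have "0 < Suc k * aa (Suc k)" using aa_pos[of "Suc k"] by simp
      then have pos: "0 < real (Suc k * aa (Suc k))" by (simp only: of_nat_0_less_iff)
      have s: "(\<Sum>n=1..Suc k * aa (Suc k). (1::real)) = real (Suc k * aa (Suc k))" by (simp only: sum_constant card_atLeastAtMost)
      show ?thesis unfolding s by (intro divide_self) (metis pos less_irrefl)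
    qed
    then show "(\<lambda>k. (\<Sum>n=1..Suc k * aa (Suc k). (1::real)) / real (Suc k * aa (Suc k))) \<longlonglongrightarrow> 1" by simp
    show "\<exists>m. \<forall>n. (\<forall>i<m. xs (i + (n - 1)) = z1 i) \<longrightarrow> \<bar>f ((shift ^^ (n - 1)) xs) - f z1\<bar> \<le> e" if "e > 0" for e
      by (rule good_lemma[OF f that])
    show "(\<lambda>k. (\<Sum>n\<in>{n\<in>{1..Suc k * aa (Suc k)}. \<not> (\<forall>i<m. xs (i + (n - 1)) = z1 i)}. (1::real)) / real (Suc k * aa (Suc k))) \<longlonglongrightarrow> 0" for m
      using ratio_one[of m] by (simp add: z1_def)
  qed
  then show ?thesis by simp
qed

lemma Vlog_sub_V: "Vlog xs \<subseteq> V xs"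
proof
  fix \<nu> assume nu: "\<nu> \<in> Vlog xs"
  have bp: "borel_prob \<nu>" using nu by (simp add: Vlog_def)
  have sm: "strict_mono (\<lambda>k. aa (Suc k))"
    using aa_mono_strict by (simp add: strict_mono_def)
  have ge: "\<forall>k. aa (Suc k) \<ge> 1" using aa_pos by simp
  have cv: "\<forall>f :: cantor \<Rightarrow> real. continuous_on UNIV f \<longrightarrow>
      (\<lambda>k. (1 / real (aa (Suc k))) * (\<Sum>n=1..aa (Suc k). f ((shift ^^ (n - 1)) xs))) \<longlonglongrightarrow> integral\<^sup>L \<nu> f"
  proof (intro allI impI)
    fix f :: "cantor \<Rightarrow> real" assume f: "continuous_on UNIV f"
    show "(\<lambda>k. (1 / real (aa (Suc k))) * (\<Sum>n=1..aa (Suc k). f ((shift ^^ (n - 1)) xs))) \<longlonglongrightarrow> integral\<^sup>L \<nu> f"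
      unfolding Vlog_int[OF nu f] by (rule cesaro_zero[OF f])
  qed
  have "\<exists>N :: nat \<Rightarrow> nat. strict_mono N \<and> (\<forall>k. N k \<ge> 1) \<and>
        (\<forall>f :: cantor \<Rightarrow> real. continuous_on UNIV f \<longrightarrow>
           (\<lambda>k. (1 / real (N k)) * (\<Sum>n=1..N k. f ((shift ^^ (n - 1)) xs)))
             \<longlonglongrightarrow> integral\<^sup>L \<nu> f)"
    by (rule exI[of _ "\<lambda>k. aa (Suc k)"]) (intro conjI sm ge cv)
  then show "\<nu> \<in> V xs" unfolding V_def using bp by (simp only: mem_Collect_eq)
qed

lemma dirac1_in_V: "return borel z1 \<in> V xs"
proof -
  have bp: "borel_prob (return borel z1)" by (simp add: borel_prob_def prob_space_return)
  have sm: "strict_mono (\<lambda>k. Suc k * aa (Suc k))"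
  proof (rule strict_monoI_Suc)
    fix k
    have "aa (Suc k) < aa (Suc (Suc k))" using aa_mono_strict by (simp add: strict_mono_def)
    then show "Suc k * aa (Suc k) < Suc (Suc k) * aa (Suc (Suc k))"
      by (intro mult_less_le_imp_less) (use aa_pos[of "Suc k"] in auto)
  qed
  have ge: "\<forall>k. Suc k * aa (Suc k) \<ge> 1" using aa_pos by (simp add: Suc_le_eq)
  have cv: "\<forall>f :: cantor \<Rightarrow> real. continuous_on UNIV f \<longrightarrow>
      (\<lambda>k. (1 / real (Suc k * aa (Suc k))) * (\<Sum>n=1..Suc k * aa (Suc k). f ((shift ^^ (n - 1)) xs))) \<longlonglongrightarrow> integral\<^sup>L (return borel z1) f"
  proof (intro allI impI)
    fix f :: "cantor \<Rightarrow> real" assume f: "continuous_on UNIV f"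
    have "integral\<^sup>L (return borel z1) f = f z1"
      by (rule integral_return) (simp_all add: borel_measurable_continuous_onI[OF f])
    then show "(\<lambda>k. (1 / real (Suc k * aa (Suc k))) * (\<Sum>n=1..Suc k * aa (Suc k). f ((shift ^^ (n - 1)) xs))) \<longlonglongrightarrow> integral\<^sup>L (return borel z1) f"
      using cesaro_one[OF f] by simp
  qed
  have "\<exists>N :: nat \<Rightarrow> nat. strict_mono N \<and> (\<forall>k. N k \<ge> 1) \<and>
        (\<forall>f :: cantor \<Rightarrow> real. continuous_on UNIV f \<longrightarrow>
           (\<lambda>k. (1 / real (N k)) * (\<Sum>n=1..N k. f ((shift ^^ (n - 1)) xs)))
             \<longlonglongrightarrow> integral\<^sup>L (return borel z1) f)"
    by (rule exI[of _ "\<lambda>k. Suc k * aa (Suc k)"]) (intro conjI sm ge cv)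
  then show ?thesis unfolding V_def using bp by (simp only: mem_Collect_eq)
qed

lemma main_sub: "ergodic_components (Vlog xs) \<subseteq> ergodic_components (V xs)"
proof
  fix \<mu> assume "\<mu> \<in> ergodic_components (Vlog xs)"
  then obtain \<nu> P where "ergodic_measure \<mu>" "\<nu> \<in> Vlog xs" "ergodic_decomposition \<nu> P" "in_weak_support P \<mu>"
    unfolding ergodic_components_def by blast
  moreover have "\<nu> \<in> V xs" using Vlog_sub_V \<open>\<nu> \<in> Vlog xs\<close> by (rule subsetD)
  ultimately show "\<mu> \<in> ergodic_components (V xs)" unfolding ergodic_components_def by blast
qed

lemma dirac1_in_comp: "return borel z1 \<in> ergodic_components (V xs)"
  unfolding ergodic_components_def mem_Collect_eq
  by (intro conjI ergodic_dirac[OF shift_z1] bexI[OF _ dirac1_in_V] exI[of _ "return SA (return borel z1)"]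
      decomp_dirac[OF shift_z1] weak_supp_dirac[OF dirac_space[of z1]])

lemma dirac1_notin_comp: "return borel z1 \<notin> ergodic_components (Vlog xs)"
proof
  assume "return borel z1 \<in> ergodic_components (Vlog xs)"
  then obtain \<nu> P where nu: "\<nu> \<in> Vlog xs" and P: "ergodic_decomposition \<nu> P" and ws: "in_weak_support P (return borel z1)"
    unfolding ergodic_components_def by blast
  have bp: "borel_prob \<nu>" using nu by (simp add: Vlog_def)
  have "integral\<^sup>L \<nu> (\<lambda>y::cantor. if y 0 then 1 else (0::real)) = (if z0 0 then 1 else 0)"
    by (rule Vlog_int[OF nu cont_coord])
  then have i0: "integral\<^sup>L \<nu> (\<lambda>y::cantor. if y 0 then 1 else (0::real)) = 0" by (simp add: z0_def)
  have "\<not> in_weak_support P (return borel (\<lambda>_. True))" by (rule not_in_comp[OF bp i0 P])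
  then show False using ws by (simp add: z1_def)
qed

theorem proposition4p4:
  shows "\<exists>x :: cantor. ergodic_components (Vlog x) \<subset> ergodic_components (V x)"
proof (intro exI psubsetI)
  show "ergodic_components (Vlog xs) \<subseteq> ergodic_components (V xs)" by (rule main_sub)
  show "ergodic_components (Vlog xs) \<noteq> ergodic_components (V xs)"
    using dirac1_in_comp dirac1_notin_comp by blast
qed

end
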